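(* A Bratteli diagram $B$ admits an ordering $\omega\in\mathcal O_B$ with $\mathrm{Int}(X_{\max}(\omega))\neq\emptyset$ if and only if there exist $x=(x_i)\in X_B$ and $n\ge1$ such that the cylinder set $U(x_1,\dots,x_n)=\{y\in X_B: y_i=x_i,\ i=1,\dots,n\}$ meets each tail-equivalence class in at most one point. The same statement holds with $X_{\min}(\omega)$ in place of $X_{\max}(\omega)$.
   Context: A Bratteli diagram $B=(V^*,E)$ has levels $V_n$ ($V_0=\{v_0\}$, all finite) and finite edge sets $E_n$ from $V_{n-1}$ to $V_n$, with source and range maps $s,r$. $X_B$ is the space of infinite paths $(x_1,x_2,\dots)$, $x_n\in E_n$, $s(x_1)=v_0$, $r(x_n)=s(x_{n+1})$, with topology generated by cylinder sets. Two paths are tail equivalent if they agree from some index on. An ordering $\omega$ is a choice of linear order on $r^{-1}(v)$ for each $v\neq v_0$; $\mathcal O_B$ is the set of orderings. $X_{\max}(\omega)$ ($X_{\min}(\omega)$) is the set of infinite paths each of whose edges is maximal (minimal) in $r^{-1}$ of its range. $\mathrm{Int}$ denotes topological interior in $X_B$. *)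

theory Defs
  imports "HOL-Analysis.Analysis"
begin

definition bratteli ::
  "(nat \<Rightarrow> 'v set) \<Rightarrow> (nat \<Rightarrow> 'e set) \<Rightarrow> ('e \<Rightarrow> 'v) \<Rightarrow> ('e \<Rightarrow> 'v) \<Rightarrow> 'v \<Rightarrow> bool" where
  "bratteli V E src rng v0 \<longleftrightarrow>
     V 0 = {v0} \<and> E 0 = {} \<and>
     (\<forall>n. finite (V n) \<and> V n \<noteq> {} \<and> finite (E n)) \<and>
     (\<forall>m n. m \<noteq> n \<longrightarrow> V m \<inter> V n = {} \<and> E m \<inter> E n = {}) \<and>
     (\<forall>n. \<forall>e\<in>E (Suc n). src e \<in> V n \<and> rng e \<in> V (Suc n)) \<and>
     (\<forall>n. \<forall>v\<in>V (Suc n). \<exists>e\<in>E (Suc n). rng e = v) \<and>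
     (\<forall>n. \<forall>v\<in>V n. \<exists>e\<in>E (Suc n). src e = v)"

text \<open>Infinite paths; x i is the edge x_(i+1) \<in> E (i+1) (0-based indexing).\<close>
definition paths ::
  "(nat \<Rightarrow> 'e set) \<Rightarrow> ('e \<Rightarrow> 'v) \<Rightarrow> ('e \<Rightarrow> 'v) \<Rightarrow> 'v \<Rightarrow> (nat \<Rightarrow> 'e) set" where
  "paths E src rng v0 = {x. (\<forall>i. x i \<in> E (Suc i)) \<and> src (x 0) = v0 \<and>
                             (\<forall>i. rng (x i) = src (x (Suc i)))}"

definition cyl :: "(nat \<Rightarrow> 'e) set \<Rightarrow> (nat \<Rightarrow> 'e) \<Rightarrow> nat \<Rightarrow> (nat \<Rightarrow> 'e) set" where
  "cyl X x n = {y \<in> X. \<forall>i<n. y i = x i}"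

definition path_topology ::
  "(nat \<Rightarrow> 'e set) \<Rightarrow> ('e \<Rightarrow> 'v) \<Rightarrow> ('e \<Rightarrow> 'v) \<Rightarrow> 'v \<Rightarrow> (nat \<Rightarrow> 'e) topology" where
  "path_topology E src rng v0 =
     subtopology (topology_generated_by
        {cyl (paths E src rng v0) x n | x n. x \<in> paths E src rng v0})
       (paths E src rng v0)"

definition tail_equiv :: "(nat \<Rightarrow> 'e) \<Rightarrow> (nat \<Rightarrow> 'e) \<Rightarrow> bool" where
  "tail_equiv x y \<longleftrightarrow> (\<exists>N. \<forall>i\<ge>N. x i = y i)"

definition rinv :: "(nat \<Rightarrow> 'e set) \<Rightarrow> ('e \<Rightarrow> 'v) \<Rightarrow> 'v \<Rightarrow> 'e set" where
  "rinv E rng v = {e. \<exists>n. e \<in> E n \<and> rng e = v}"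

definition orderings ::
  "(nat \<Rightarrow> 'v set) \<Rightarrow> (nat \<Rightarrow> 'e set) \<Rightarrow> ('e \<Rightarrow> 'v) \<Rightarrow> ('v \<Rightarrow> 'e rel) set" where
  "orderings V E rng = {\<omega>. \<forall>n. \<forall>v\<in>V (Suc n). linear_order_on (rinv E rng v) (\<omega> v)}"

definition Xmax ::
  "(nat \<Rightarrow> 'e set) \<Rightarrow> ('e \<Rightarrow> 'v) \<Rightarrow> ('e \<Rightarrow> 'v) \<Rightarrow> 'v \<Rightarrow> ('v \<Rightarrow> 'e rel) \<Rightarrow> (nat \<Rightarrow> 'e) set" where
  "Xmax E src rng v0 \<omega> = {x \<in> paths E src rng v0.
      \<forall>i. \<forall>f\<in>rinv E rng (rng (x i)). (f, x i) \<in> \<omega> (rng (x i))}"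

definition Xmin ::
  "(nat \<Rightarrow> 'e set) \<Rightarrow> ('e \<Rightarrow> 'v) \<Rightarrow> ('e \<Rightarrow> 'v) \<Rightarrow> 'v \<Rightarrow> ('v \<Rightarrow> 'e rel) \<Rightarrow> (nat \<Rightarrow> 'e) set" where
  "Xmin E src rng v0 \<omega> = {x \<in> paths E src rng v0.
      \<forall>i. \<forall>f\<in>rinv E rng (rng (x i)). (x i, f) \<in> \<omega> (rng (x i))}"

end

theory Submission
  imports Defs
begin

definition mktop :: "'e set \<Rightarrow> 'e rel \<Rightarrow> 'e \<Rightarrow> 'e rel" where
  "mktop A r e = {(a,b). (a,b)\<in>r \<and> a\<noteq>e \<and> b\<noteq>e} \<union> {(a,b). a\<in>A \<and> b = e}"

lemma mktop_linear:
  assumes "linear_order_on A r" "e \<in> A"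
  shows "linear_order_on A (mktop A r e)"
proof -
  have sub: "r \<subseteq> A \<times> A" and rf: "\<And>a. a \<in> A \<Longrightarrow> (a,a) \<in> r"
    and tr: "\<And>a b c. (a,b) \<in> r \<Longrightarrow> (b,c) \<in> r \<Longrightarrow> (a,c) \<in> r"
    and tot: "\<And>a b. a \<in> A \<Longrightarrow> b \<in> A \<Longrightarrow> a \<noteq> b \<Longrightarrow> (a,b) \<in> r \<or> (b,a) \<in> r"
    and an: "\<And>a b. (a,b) \<in> r \<Longrightarrow> (b,a) \<in> r \<Longrightarrow> a = b"
    using assms(1) unfolding linear_order_on_def partial_order_on_def preorder_on_def refl_on_def
      trans_on_def antisym_on_def total_on_def by (auto; blast)+
  let ?m = "mktop A r e"
  have m: "(a,b) \<in> ?m \<longleftrightarrow> ((a,b) \<in> r \<and> a \<noteq> e \<and> b \<noteq> e) \<or> (a \<in> A \<and> b = e)" for a b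
    unfolding mktop_def by blast
  have 1: "?m \<subseteq> A \<times> A" using sub assms(2) unfolding mktop_def by blast
  have 2: "refl_on A ?m" unfolding refl_on_def
  proof
    fix x assume "x \<in> A"
    then show "(x,x) \<in> ?m" using rf[of x] m[of x x] by blast
  qed
  have 3: "trans ?m" unfolding trans_on_def
  proof (intro ballI impI)
    fix a b c assume ab: "(a,b) \<in> ?m" and bc: "(b,c) \<in> ?m"
    have aA: "a \<in> A" using 1 ab by blast
    show "(a,c) \<in> ?m"
    proof (cases "c = e")
      case True then show ?thesis using aA m[of a c] by blast
    next
      case False
      then have bc': "(b,c) \<in> r" "b \<noteq> e" using bc m[of b c] by auto
      then have "(a,b) \<in> r" "a \<noteq> e" using ab m[of a b] by auto
      then show ?thesis using tr[OF _ bc'(1)] False m[of a c] by blast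
    qed
  qed
  have 4: "antisym ?m" unfolding antisym_on_def
  proof (intro ballI impI)
    fix a b assume ab: "(a,b) \<in> ?m" and ba: "(b,a) \<in> ?m"
    show "a = b"
    proof (cases "a = e \<or> b = e")
      case True then show ?thesis using ab ba m[of a b] m[of b a] by auto
    next
      case False then show ?thesis using ab ba m[of a b] m[of b a] an by auto
    qed
  qed
  have 5: "total_on A ?m" unfolding total_on_def
  proof (intro ballI impI)
    fix a b assume a: "a \<in> A" and b: "b \<in> A" and ne: "a \<noteq> b"
    show "(a,b) \<in> ?m \<or> (b,a) \<in> ?m"
    proof (cases "a = e \<or> b = e")
      case True then show ?thesis using a b m[of a b] m[of b a] by auto
    next
      case False then show ?thesis using tot[OF a b ne] m[of a b] m[of b a] by auto
    qed
  qed
  show ?thesis unfolding linear_order_on_def partial_order_on_def preorder_on_def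
    using 1 2 3 4 5 by blast
qed

lemma cyl_mono: "n \<le> m \<Longrightarrow> cyl X p m \<subseteq> cyl X p n"
  unfolding cyl_def by auto

lemma gen_cyl:
  assumes "generate_topology_on {cyl X x n | x n. x \<in> X} G" "p \<in> G" "p \<in> X"
  shows "\<exists>n. cyl X p n \<subseteq> G"
  using assms
proof (induction arbitrary: p rule: generate_topology_on.induct)
  case Empty then show ?case by simp
next
  case (Int a b)
  then obtain n1 n2 where "cyl X p n1 \<subseteq> a" "cyl X p n2 \<subseteq> b" by blast
  then have "cyl X p (max n1 n2) \<subseteq> a \<inter> b"
    using cyl_mono[of n1 "max n1 n2" X p] cyl_mono[of n2 "max n1 n2" X p] by auto
  then show ?case by blast
next
  case (UN K)
  then obtain k where "k \<in> K" "p \<in> k" by blast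
  with UN obtain n where "cyl X p n \<subseteq> k" by blast
  with \<open>k \<in> K\<close> show ?case by blast
next
  case (Basis s)
  then obtain x n where s: "s = cyl X x n" by blast
  with Basis have "cyl X p n = s" unfolding cyl_def by auto
  then show ?case by blast
qed

lemma paths_E: "x \<in> paths E src rng v0 \<Longrightarrow> x i \<in> E (Suc i)"
  unfolding paths_def by auto
lemma paths_link: "x \<in> paths E src rng v0 \<Longrightarrow> rng (x i) = src (x (Suc i))"
  unfolding paths_def by auto

lemma rng_V: "bratteli V E src rng v0 \<Longrightarrow> x \<in> paths E src rng v0 \<Longrightarrow> rng (x i) \<in> V (Suc i)"
  unfolding bratteli_def paths_def by blast

lemma rinv_in: "x \<in> paths E src rng v0 \<Longrightarrow> x i \<in> rinv E rng (rng (x i))"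
  unfolding rinv_def paths_def by blast

lemma level_eq:
  assumes "bratteli V E src rng v0" "y \<in> paths E src rng v0" "z \<in> paths E src rng v0"
    "rng (y k) = rng (z j)"
  shows "k = j"
proof (rule ccontr)
  assume "k \<noteq> j"
  then have "V (Suc k) \<inter> V (Suc j) = {}" using assms(1) unfolding bratteli_def by auto
  moreover have "rng (y k) \<in> V (Suc k)" "rng (z j) \<in> V (Suc j)"
    using rng_V assms by metis+
  ultimately show False using assms(4) by auto
qed

lemma max_tail_eq:
  assumes br: "bratteli V E src rng v0" and om: "\<omega> \<in> orderings V E rng"
    and y: "y \<in> Xmax E src rng v0 \<omega>" and z: "z \<in> Xmax E src rng v0 \<omega>"
    and t: "tail_equiv y z"
  shows "y = z"
proof -
  have yp: "y \<in> paths E src rng v0" and zp: "z \<in> paths E src rng v0"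
    using y z unfolding Xmax_def by auto
  have step: "y i = z i" if "y (Suc i) = z (Suc i)" for i
  proof -
    define w where "w = rng (y i)"
    have wz: "rng (z i) = w" using that paths_link[OF yp, of i] paths_link[OF zp, of i]
      unfolding w_def by simp
    have wV: "w \<in> V (Suc i)" using rng_V[OF br yp] w_def by simp
    have lin: "linear_order_on (rinv E rng w) (\<omega> w)" using om wV unfolding orderings_def by blast
    have yi: "y i \<in> rinv E rng w" using rinv_in[OF yp] w_def by simp
    have zi: "z i \<in> rinv E rng w" using rinv_in[OF zp, of i] wz by simp
    have 1: "(z i, y i) \<in> \<omega> w" using y yi zi unfolding Xmax_def w_def by auto
    have 2: "(y i, z i) \<in> \<omega> w" using z yi zi wz unfolding Xmax_def by force
    from lin have "antisym (\<omega> w)" unfolding linear_order_on_def partial_order_on_def by auto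
    with 1 2 show ?thesis unfolding antisym_on_def by blast
  qed
  obtain N where N: "\<forall>i\<ge>N. y i = z i" using t unfolding tail_equiv_def by blast
  have "\<forall>i. i + d \<ge> N \<longrightarrow> y i = z i" for d
  proof (induction d)
    case 0 then show ?case using N by simp
  next
    case (Suc d)
    show ?case
    proof (intro allI impI)
      fix i assume "i + Suc d \<ge> N"
      then have "Suc i + d \<ge> N" by simp
      then have "y (Suc i) = z (Suc i)" using Suc by blast
      then show "y i = z i" by (rule step)
    qed
  qed
  then show ?thesis by (metis le_add2 ext)
qed

lemma forward:
  assumes br: "bratteli V E src rng v0" and om: "\<omega> \<in> orderings V E rng"
    and ne: "path_topology E src rng v0 interior_of Xmax E src rng v0 \<omega> \<noteq> {}"
  shows "\<exists>x\<in>paths E src rng v0. \<exists>n\<ge>1.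
                 \<forall>y\<in>cyl (paths E src rng v0) x n. \<forall>z\<in>cyl (paths E src rng v0) x n.
                    tail_equiv y z \<longrightarrow> y = z"
proof -
  let ?X = "paths E src rng v0"
  obtain p Op where O: "openin (path_topology E src rng v0) Op" "p \<in> Op" "Op \<subseteq> Xmax E src rng v0 \<omega>"
    using ne unfolding interior_of_def by blast
  then obtain G where G: "openin (topology_generated_by {cyl ?X x n | x n. x \<in> ?X}) G"
    "Op = G \<inter> ?X"
    unfolding path_topology_def openin_subtopology by blast
  have pX: "p \<in> ?X" "p \<in> G" using O G by auto
  obtain n where n: "cyl ?X p n \<subseteq> G"
    using gen_cyl[OF openin_topology_generated_by[OF G(1)] pX(2) pX(1)] by blast
  have sub: "cyl ?X p (Suc n) \<subseteq> Xmax E src rng v0 \<omega>"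
    using cyl_mono[of n "Suc n" ?X p] n O(3) G(2) unfolding cyl_def by auto
  have H: "\<forall>y\<in>cyl ?X p (Suc n). \<forall>z\<in>cyl ?X p (Suc n). tail_equiv y z \<longrightarrow> y = z"
    using sub max_tail_eq[OF br om] by (meson subsetD)
  show ?thesis using H pX(1) by (intro bexI[of _ p] exI[of _ "Suc n"]) auto
qed

lemma backward:
  assumes br: "bratteli V E src rng v0" and xX: "x \<in> paths E src rng v0"
    and inj: "\<forall>y\<in>cyl (paths E src rng v0) x n. \<forall>z\<in>cyl (paths E src rng v0) x n.
                    tail_equiv y z \<longrightarrow> y = z"
  shows "\<exists>\<omega>\<in>orderings V E rng.
              path_topology E src rng v0 interior_of Xmax E src rng v0 \<omega> \<noteq> {}"
proof -
  let ?X = "paths E src rng v0"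
  define U where "U = cyl ?X x n"
  have UX: "U \<subseteq> ?X" unfolding U_def cyl_def by auto
  have uniq: "y k = z j" if "y \<in> U" "z \<in> U" "rng (y k) = rng (z j)" for y z k j
  proof -
    have yp: "y \<in> ?X" and zp: "z \<in> ?X" using that UX by auto
    have kj: "k = j" using level_eq[OF br yp zp that(3)] .
    define z' where "z' i = (if i \<le> k then y i else z i)" for i
    have "z' \<in> ?X"
      unfolding paths_def
    proof (intro CollectI conjI allI)
      fix i show "z' i \<in> E (Suc i)" using paths_E[OF yp] paths_E[OF zp] z'_def by simp
    next
      show "src (z' 0) = v0" using yp unfolding z'_def paths_def by simp
    next
      fix i show "rng (z' i) = src (z' (Suc i))"
        using paths_link[OF yp, of i] paths_link[OF zp, of i] that(3) kj
        unfolding z'_def by (cases "i < k"; cases "i = k"; simp)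
    qed
    moreover have "\<forall>i<n. z' i = x i" using that(1,2) unfolding U_def cyl_def z'_def by auto
    ultimately have "z' \<in> U" unfolding U_def cyl_def by auto
    moreover have "tail_equiv z' z" unfolding tail_equiv_def z'_def by (rule exI[of _ "Suc k"]) auto
    ultimately have "z' = z" using inj that(2) unfolding U_def by blast
    then have "z' k = z k" by simp
    then have "z k = y k" by (simp add: z'_def)
    then show ?thesis using kj by simp
  qed
  define tgt where "tgt w = (SOME e. \<exists>y\<in>U. \<exists>k. rng (y k) = w \<and> y k = e)" for w
  define base where "base w = (SOME r. well_order_on (rinv E rng w) r)" for w
  define \<omega> where "\<omega> w = mktop (rinv E rng w) (base w)
      (if \<exists>y\<in>U. \<exists>k. rng (y k) = w then tgt w else (SOME e. e \<in> rinv E rng w))" for w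
  have tgt: "tgt (rng (y k)) = y k" if "y \<in> U" for y k
  proof -
    have "\<exists>e. \<exists>z\<in>U. \<exists>j. rng (z j) = rng (y k) \<and> z j = e" using that by blast
    from someI_ex[OF this] obtain z j where "z \<in> U" "rng (z j) = rng (y k)" "z j = tgt (rng (y k))"
      unfolding tgt_def by blast
    then show ?thesis using uniq[OF that \<open>z \<in> U\<close>] by metis
  qed
  have om: "\<omega> \<in> orderings V E rng"
    unfolding orderings_def
  proof (intro CollectI allI ballI)
    fix m w assume wV: "w \<in> V (Suc m)"
    have lb: "linear_order_on (rinv E rng w) (base w)"
      using someI_ex[OF well_order_on[of "rinv E rng w"]] unfolding base_def well_order_on_def by blast
    have ch: "(if \<exists>y\<in>U. \<exists>k. rng (y k) = w then tgt w else (SOME e. e \<in> rinv E rng w)) \<in> rinv E rng w"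
    proof (cases "\<exists>y\<in>U. \<exists>k. rng (y k) = w")
      case True
      then obtain y k where "y \<in> U" "rng (y k) = w" by blast
      then show ?thesis using tgt rinv_in UX by (metis subsetD)
    next
      case False
      from br wV obtain e where "e \<in> E (Suc m)" "rng e = w" unfolding bratteli_def by blast
      then have "\<exists>e. e \<in> rinv E rng w" unfolding rinv_def by blast
      then have "rinv E rng w \<noteq> {}" by blast
      then show ?thesis using False by (simp add: some_in_eq)
    qed
    show "linear_order_on (rinv E rng w) (\<omega> w)"
      unfolding \<omega>_def by (rule mktop_linear[OF lb ch])
  qed
  have Usub: "U \<subseteq> Xmax E src rng v0 \<omega>"
  proof
    fix y assume yU: "y \<in> U"
    have "\<forall>i. \<forall>f\<in>rinv E rng (rng (y i)). (f, y i) \<in> \<omega> (rng (y i))"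
    proof (intro allI ballI)
      fix i f assume "f \<in> rinv E rng (rng (y i))"
      moreover have ex: "\<exists>z\<in>U. \<exists>k. rng (z k) = rng (y i)" using yU by blast
      have c: "(if \<exists>z\<in>U. \<exists>k. rng (z k) = rng (y i) then tgt (rng (y i))
                else (SOME e. e \<in> rinv E rng (rng (y i)))) = y i"
        using if_P[OF ex] tgt[OF yU, of i] by (rule trans)
      have "\<omega> (rng (y i)) = mktop (rinv E rng (rng (y i))) (base (rng (y i))) (y i)"
        unfolding \<omega>_def c ..
      ultimately show "(f, y i) \<in> \<omega> (rng (y i))"
        unfolding mktop_def by simp
    qed
    then show "y \<in> Xmax E src rng v0 \<omega>" using yU UX unfolding Xmax_def by auto
  qed
  have Uopen: "openin (path_topology E src rng v0) U"
  proof -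
    have "U \<in> {cyl ?X x n | x n. x \<in> ?X}" using xX unfolding U_def by blast
    then have "openin (topology_generated_by {cyl ?X x n | x n. x \<in> ?X}) U"
      by (rule topology_generated_by_Basis)
    moreover have "U = U \<inter> ?X" using UX by blast
    ultimately show ?thesis unfolding path_topology_def openin_subtopology by blast
  qed
  have "x \<in> U" using xX unfolding U_def cyl_def by auto
  then have "x \<in> path_topology E src rng v0 interior_of Xmax E src rng v0 \<omega>"
    unfolding interior_of_def using Uopen Usub by blast
  then show ?thesis using om by blast
qed

lemma Xmin_conv: "Xmin E src rng v0 \<omega> = Xmax E src rng v0 (\<lambda>v. (\<omega> v)\<inverse>)"
  unfolding Xmin_def Xmax_def by auto

lemma orderings_conv: "\<omega> \<in> orderings V E rng \<Longrightarrow> (\<lambda>v. (\<omega> v)\<inverse>) \<in> orderings V E rng"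
  unfolding orderings_def by simp

theorem mainTheorem4:
  fixes V :: "nat \<Rightarrow> 'v set" and E :: "nat \<Rightarrow> 'e set"
    and src rng :: "'e \<Rightarrow> 'v" and v0 :: 'v
  assumes "bratteli V E src rng v0"
  shows "((\<exists>\<omega>\<in>orderings V E rng.
              path_topology E src rng v0 interior_of Xmax E src rng v0 \<omega> \<noteq> {})
          \<longleftrightarrow> (\<exists>x\<in>paths E src rng v0. \<exists>n\<ge>1.
                 \<forall>y\<in>cyl (paths E src rng v0) x n. \<forall>z\<in>cyl (paths E src rng v0) x n.
                    tail_equiv y z \<longrightarrow> y = z))
       \<and> ((\<exists>\<omega>\<in>orderings V E rng.
              path_topology E src rng v0 interior_of Xmin E src rng v0 \<omega> \<noteq> {})
          \<longleftrightarrow> (\<exists>x\<in>paths E src rng v0. \<exists>n\<ge>1.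
                 \<forall>y\<in>cyl (paths E src rng v0) x n. \<forall>z\<in>cyl (paths E src rng v0) x n.
                    tail_equiv y z \<longrightarrow> y = z))"
proof -
  have A: "(\<exists>\<omega>\<in>orderings V E rng.
              path_topology E src rng v0 interior_of Xmax E src rng v0 \<omega> \<noteq> {})
          \<longleftrightarrow> (\<exists>x\<in>paths E src rng v0. \<exists>n\<ge>1.
                 \<forall>y\<in>cyl (paths E src rng v0) x n. \<forall>z\<in>cyl (paths E src rng v0) x n.
                    tail_equiv y z \<longrightarrow> y = z)"
  proof
    assume "\<exists>\<omega>\<in>orderings V E rng.
              path_topology E src rng v0 interior_of Xmax E src rng v0 \<omega> \<noteq> {}"
    then obtain \<omega> where "\<omega> \<in> orderings V E rng"
      "path_topology E src rng v0 interior_of Xmax E src rng v0 \<omega> \<noteq> {}" by blast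
    then show "\<exists>x\<in>paths E src rng v0. \<exists>n\<ge>1.
                 \<forall>y\<in>cyl (paths E src rng v0) x n. \<forall>z\<in>cyl (paths E src rng v0) x n.
                    tail_equiv y z \<longrightarrow> y = z" by (rule forward[OF assms])
  next
    assume "\<exists>x\<in>paths E src rng v0. \<exists>n\<ge>1.
                 \<forall>y\<in>cyl (paths E src rng v0) x n. \<forall>z\<in>cyl (paths E src rng v0) x n.
                    tail_equiv y z \<longrightarrow> y = z"
    then obtain x n where "x \<in> paths E src rng v0" "\<forall>y\<in>cyl (paths E src rng v0) x n. \<forall>z\<in>cyl (paths E src rng v0) x n.
                    tail_equiv y z \<longrightarrow> y = z" by blast
    then show "\<exists>\<omega>\<in>orderings V E rng.
              path_topology E src rng v0 interior_of Xmax E src rng v0 \<omega> \<noteq> {}"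
      by (rule backward[OF assms])
  qed
  have B: "(\<exists>\<omega>\<in>orderings V E rng.
              path_topology E src rng v0 interior_of Xmin E src rng v0 \<omega> \<noteq> {})
       \<longleftrightarrow> (\<exists>\<omega>\<in>orderings V E rng.
              path_topology E src rng v0 interior_of Xmax E src rng v0 \<omega> \<noteq> {})"
  proof
    assume "\<exists>\<omega>\<in>orderings V E rng.
              path_topology E src rng v0 interior_of Xmin E src rng v0 \<omega> \<noteq> {}"
    then show "\<exists>\<omega>\<in>orderings V E rng.
              path_topology E src rng v0 interior_of Xmax E src rng v0 \<omega> \<noteq> {}"
      unfolding Xmin_conv using orderings_conv by blast
  next
    assume "\<exists>\<omega>\<in>orderings V E rng.
              path_topology E src rng v0 interior_of Xmax E src rng v0 \<omega> \<noteq> {}"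
    then obtain \<omega> where "\<omega> \<in> orderings V E rng"
      "path_topology E src rng v0 interior_of Xmax E src rng v0 \<omega> \<noteq> {}" by blast
    moreover have "Xmax E src rng v0 \<omega> = Xmin E src rng v0 (\<lambda>v. (\<omega> v)\<inverse>)"
      unfolding Xmin_conv by simp
    ultimately show "\<exists>\<omega>\<in>orderings V E rng.
              path_topology E src rng v0 interior_of Xmin E src rng v0 \<omega> \<noteq> {}"
      using orderings_conv by metis
  qed
  show ?thesis using A B by blast
qed

end
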